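(* Let $(V,\langle\cdot,\cdot\rangle)$ be a pseudo-Euclidean real vector space of signature $(k,l)$ with $k\ge2$, $l\ge2$, let $Z\subseteq V$ be a subspace with $q^+(Z)\ge1$, and let $H\subseteq V$ be a positive $(k-1)$-plane, so that $V=H\oplus H^\perp$ with $H^\perp$ Minkowski of signature $(1,l)$. Let $\pi^{H^\perp}:V\to H^\perp$ be the projection along $H$, and let $C^+(H^\perp)$ be either one of the two connected components of $\{w\in H^\perp:\langle w,w\rangle\ge0\}\setminus\{0\}$. The following are equivalent: (i) $H$ is $Z$-orthogonally-extendable; (ii) $q^+(Z\cap H^\perp)\ge1$; (iii) $\pi^{H^\perp}(Z^\perp)\cap C^+(H^\perp)=\emptyset$.
   Context: A pseudo-Euclidean space of signature $(k,l)$ is a finite-dimensional real vector space with a symmetric non-degenerate bilinear form whose Sylvester diagonal form has $k$ entries $+1$ and $l$ entries $-1$. For a subspace $L$, $q^+(L)$ denotes the number of $+1$'s in a diagonalization of the restriction of the form to $L$, and $L^\perp$ is the orthogonal complement in $V$. A positive $r$-plane is an $r$-dimensional subspace on which the form is positive definite. $H$ is $Z$-orthogonally-extendable if there is $z\in Z\cap H^\perp$ with $H+\mathbb{R}z$ a positive $k$-plane. *)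

theory Defs
  imports "HOL-Analysis.Analysis"
begin

definition pe_form :: "('a::euclidean_space \<Rightarrow> 'a \<Rightarrow> real) \<Rightarrow> bool" where
  "pe_form B \<longleftrightarrow> bilinear B \<and> (\<forall>x y. B x y = B y x) \<and> (\<forall>x. (\<forall>y. B x y = 0) \<longrightarrow> x = 0)"

definition diag_basis :: "('a::euclidean_space \<Rightarrow> 'a \<Rightarrow> real) \<Rightarrow> 'a set \<Rightarrow> 'a set \<Rightarrow> bool" where
  "diag_basis B L b \<longleftrightarrow> finite b \<and> independent b \<and> span b = L \<and>
     (\<forall>u\<in>b. \<forall>v\<in>b. u \<noteq> v \<longrightarrow> B u v = 0) \<and> (\<forall>e\<in>b. B e e \<in> {-1, 0, 1})"

definition q_plus :: "('a::euclidean_space \<Rightarrow> 'a \<Rightarrow> real) \<Rightarrow> 'a set \<Rightarrow> nat" where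
  "q_plus B L = card {e \<in> (SOME b. diag_basis B L b). B e e = 1}"

definition q_minus :: "('a::euclidean_space \<Rightarrow> 'a \<Rightarrow> real) \<Rightarrow> 'a set \<Rightarrow> nat" where
  "q_minus B L = card {e \<in> (SOME b. diag_basis B L b). B e e = -1}"

definition has_signature :: "('a::euclidean_space \<Rightarrow> 'a \<Rightarrow> real) \<Rightarrow> nat \<Rightarrow> nat \<Rightarrow> bool" where
  "has_signature B k l \<longleftrightarrow> q_plus B UNIV = k \<and> q_minus B UNIV = l"

definition orth_compl :: "('a::euclidean_space \<Rightarrow> 'a \<Rightarrow> real) \<Rightarrow> 'a set \<Rightarrow> 'a set" where
  "orth_compl B L = {v. \<forall>u\<in>L. B u v = 0}"

definition pos_plane :: "('a::euclidean_space \<Rightarrow> 'a \<Rightarrow> real) \<Rightarrow> nat \<Rightarrow> 'a set \<Rightarrow> bool" where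
  "pos_plane B r P \<longleftrightarrow> subspace P \<and> dim P = r \<and> (\<forall>v\<in>P. v \<noteq> 0 \<longrightarrow> B v v > 0)"

text \<open>H is Z-orthogonally-extendable (k = positive index of the ambient space).\<close>
definition orth_extendable ::
  "('a::euclidean_space \<Rightarrow> 'a \<Rightarrow> real) \<Rightarrow> nat \<Rightarrow> 'a set \<Rightarrow> 'a set \<Rightarrow> bool" where
  "orth_extendable B k Z H \<longleftrightarrow>
     (\<exists>z \<in> Z \<inter> orth_compl B H. pos_plane B k {h + c *\<^sub>R z | h c. h \<in> H})"

definition proj_perp :: "('a::euclidean_space \<Rightarrow> 'a \<Rightarrow> real) \<Rightarrow> 'a set \<Rightarrow> 'a \<Rightarrow> 'a" where
  "proj_perp B H v = (THE w. w \<in> orth_compl B H \<and> v - w \<in> H)"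

end

theory Submission
  imports Defs
begin

locale pef =
  fixes B :: "'a::euclidean_space \<Rightarrow> 'a \<Rightarrow> real"
  assumes pe: "pe_form B"
begin

lemma linL: "linear (\<lambda>x. B x y)" and linR: "linear (B x)"
  using pe unfolding pe_form_def bilinear_def by auto

lemma symm: "B x y = B y x" using pe unfolding pe_form_def by auto
lemma nondeg: "(\<And>y. B x y = 0) \<Longrightarrow> x = 0" using pe unfolding pe_form_def by auto

lemma addL[simp]: "B (x + y) z = B x z + B y z" using linear_add[OF linL] by auto
lemma addR[simp]: "B z (x + y) = B z x + B z y" using linear_add[OF linR] by auto
lemma scaleL[simp]: "B (c *\<^sub>R x) z = c * B x z" using linear_scale[OF linL] by auto
lemma scaleR[simp]: "B z (c *\<^sub>R x) = c * B z x" using linear_scale[OF linR] by auto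
lemma diffL[simp]: "B (x - y) z = B x z - B y z" using linear_diff[OF linL] by auto
lemma diffR[simp]: "B z (x - y) = B z x - B z y" using linear_diff[OF linR] by auto
lemma minusL[simp]: "B (- x) z = - B x z" using linear_neg[OF linL] by auto
lemma minusR[simp]: "B z (- x) = - B z x" using linear_neg[OF linR] by auto
lemma zeroL[simp]: "B 0 z = 0" using linear_0[OF linL] by auto
lemma zeroR[simp]: "B z 0 = 0" using linear_0[OF linR] by auto
lemma sumL: "B (\<Sum>i\<in>I. f i) z = (\<Sum>i\<in>I. B (f i) z)" using linear_sum[OF linL] by auto
lemma sumR: "B z (\<Sum>i\<in>I. f i) = (\<Sum>i\<in>I. B z (f i))" using linear_sum[OF linR] by auto

lemma diag_exists: "subspace L \<Longrightarrow> \<exists>b. diag_basis B L b"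
proof (induction "dim L" arbitrary: L rule: less_induct)
  case less
  show ?case
  proof (cases "\<forall>u\<in>L. B u u = 0")
    case True
    have zero: "B u v = 0" if "u \<in> L" "v \<in> L" for u v
    proof -
      have "B (u+v) (u+v) = 0" using True that less.prems subspace_add by blast
      then show ?thesis using True that by (simp add: symm[of v u])
    qed
    obtain b where b: "b \<subseteq> L" "independent b" "L \<subseteq> span b" "card b = dim L"
      using basis_exists[of L] by metis
    have "span b = L" using b less.prems span_minimal by blast
    then show ?thesis unfolding diag_basis_def using b zero True
      by (intro exI[of _ b]) (auto simp: finiteI_independent)
  next
    case False
    then obtain v where v: "v \<in> L" "B v v \<noteq> 0" by auto
    define e where "e = (1 / sqrt \<bar>B v v\<bar>) *\<^sub>R v"
    have eL: "e \<in> L" using v less.prems unfolding e_def by (simp add: subspace_scale)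
    have "B e e = B v v / \<bar>B v v\<bar>" unfolding e_def using v
      by (simp add: real_sqrt_mult[symmetric] del: real_sqrt_mult)
    then have ee: "B e e \<in> {-1, 1}" using v by (cases "B v v > 0") auto
    define L' where "L' = {u\<in>L. B e u = 0}"
    have subL': "subspace L'" unfolding L'_def subspace_def using less.prems
      by (auto simp: subspace_def)
    have "e \<notin> L'" using ee unfolding L'_def by auto
    then have "L' \<subset> L" using eL unfolding L'_def by auto
    moreover have "span L' = L'" "span L = L" using subL' less.prems by (simp_all add: span_eq_iff)
    ultimately have "dim L' < dim L"
      using dim_psubset[of L' L] by metis
    then obtain b' where b': "diag_basis B L' b'" using less.hyps subL' by blast
    have spb': "span b' = L'" using b' unfolding diag_basis_def by auto
    have enot: "e \<notin> span b'" using spb' \<open>e \<notin> L'\<close> by auto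
    then have enb: "e \<notin> b'" using span_base by blast
    have "span (insert e b') = L"
    proof
      show "span (insert e b') \<subseteq> L"
        using spb' eL less.prems span_base unfolding L'_def by (intro span_minimal) blast+
      show "L \<subseteq> span (insert e b')"
      proof
        fix x assume x: "x \<in> L"
        define k where "k = B e x / B e e"
        have "x - k *\<^sub>R e \<in> L'" unfolding L'_def k_def using x eL less.prems ee
          by (auto simp: subspace_diff subspace_scale)
        then show "x \<in> span (insert e b')" unfolding span_insert spb' by auto
      qed
    qed
    moreover have "independent (insert e b')" using b' enot enb
      unfolding diag_basis_def by (simp add: independent_insert)
    moreover have "\<forall>u\<in>insert e b'. \<forall>w\<in>insert e b'. u \<noteq> w \<longrightarrow> B u w = 0"
    proof (intro ballI impI)
      fix u w assume u: "u \<in> insert e b'" and w: "w \<in> insert e b'" and uw: "u \<noteq> w"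
      have bL: "\<And>y. y \<in> b' \<Longrightarrow> B e y = 0" using spb' span_base unfolding L'_def by blast
      show "B u w = 0"
        using u w uw bL b' symm[of u e] unfolding diag_basis_def by auto
    qed
    ultimately show ?thesis using b' ee unfolding diag_basis_def by (intro exI[of _ "insert e b'"]) auto
  qed
qed

lemma quad_diag:
  assumes "finite b" "\<forall>u\<in>b. \<forall>v\<in>b. u \<noteq> v \<longrightarrow> B u v = 0"
  shows "B (\<Sum>e\<in>b. c e *\<^sub>R e) (\<Sum>e\<in>b. c e *\<^sub>R e) = (\<Sum>e\<in>b. (c e)^2 * B e e)"
proof -
  have inner: "(\<Sum>f\<in>b. c f * B f e) = c e * B e e" if "e \<in> b" for e
  proof -
    have "(\<Sum>f\<in>b. c f * B f e) = (\<Sum>f\<in>b. if f = e then c e * B e e else 0)"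
      using assms(2) that by (intro sum.cong refl) auto
    then show ?thesis using assms(1) that by simp
  qed
  have "B (\<Sum>e\<in>b. c e *\<^sub>R e) (\<Sum>e\<in>b. c e *\<^sub>R e) = (\<Sum>e\<in>b. c e * (\<Sum>f\<in>b. c f * B f e))"
    by (simp add: sumL sumR)
  also have "\<dots> = (\<Sum>e\<in>b. (c e)^2 * B e e)"
    using inner by (intro sum.cong refl) (simp add: power2_eq_square)
  finally show ?thesis .
qed

lemma diag_some: "subspace L \<Longrightarrow> diag_basis B L (SOME b. diag_basis B L b)"
  using diag_exists someI_ex by metis

lemma nonpos_span:
  assumes "finite b" "\<forall>u\<in>b. \<forall>v\<in>b. u \<noteq> v \<longrightarrow> B u v = 0" "\<forall>e\<in>b. B e e \<le> 0"
    and "v \<in> span b"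
  shows "B v v \<le> 0"
proof -
  obtain c where "v = (\<Sum>e\<in>b. c e *\<^sub>R e)" using assms(1,4) span_finite by auto
  then have "B v v = (\<Sum>e\<in>b. (c e)^2 * B e e)" using quad_diag assms by simp
  also have "\<dots> \<le> 0" using assms(3) by (intro sum_nonpos) (simp add: mult_nonneg_nonpos)
  finally show ?thesis .
qed

lemma pos_span:
  assumes "finite b" "\<forall>u\<in>b. \<forall>v\<in>b. u \<noteq> v \<longrightarrow> B u v = 0" "\<forall>e\<in>b. B e e > 0"
    and "v \<in> span b" "v \<noteq> 0"
  shows "B v v > 0"
proof -
  obtain c where v: "v = (\<Sum>e\<in>b. c e *\<^sub>R e)" using assms(1,4) span_finite by auto
  then have "B v v = (\<Sum>e\<in>b. (c e)^2 * B e e)" using quad_diag assms by simp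
  moreover have "\<exists>e\<in>b. c e \<noteq> 0" using v assms(5) by (metis (no_types, lifting) scale_zero_left sum.neutral)
  then obtain e where "e \<in> b" "c e \<noteq> 0" by blast
  moreover have "(\<Sum>e\<in>b. (c e)^2 * B e e) > 0"
    using calculation assms by (intro sum_pos2[of b e]) (auto intro: mult_nonneg_nonneg)
  ultimately show ?thesis by simp
qed

lemma qplus_iff:
  assumes "subspace L"
  shows "q_plus B L \<ge> 1 \<longleftrightarrow> (\<exists>v\<in>L. B v v > 0)"
proof -
  define b where "b = (SOME b. diag_basis B L b)"
  have d: "diag_basis B L b" unfolding b_def using diag_some assms .
  have fin: "finite b" using d unfolding diag_basis_def by auto
  show ?thesis
  proof
    assume "q_plus B L \<ge> 1"
    then have "card {e \<in> b. B e e = 1} \<ge> 1" unfolding q_plus_def b_def[symmetric] by auto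
    then have "{e \<in> b. B e e = 1} \<noteq> {}" by (metis card.empty not_one_le_zero)
    then obtain e where "e \<in> b" "B e e = 1" by auto
    moreover have "e \<in> L" using d \<open>e \<in> b\<close> span_base unfolding diag_basis_def by blast
    ultimately show "\<exists>v\<in>L. B v v > 0" by (metis zero_less_one)
  next
    assume "\<exists>v\<in>L. B v v > 0"
    then obtain v where v: "v \<in> L" "B v v > 0" by auto
    show "q_plus B L \<ge> 1"
    proof (rule ccontr)
      assume "\<not> q_plus B L \<ge> 1"
      then have "card {e \<in> b. B e e = 1} = 0" unfolding q_plus_def b_def[symmetric] by auto
      then have "{e \<in> b. B e e = 1} = {}" using fin by simp
      then have "\<forall>e\<in>b. B e e \<le> 0" using d unfolding diag_basis_def by force
      then have "B v v \<le> 0" using nonpos_span[of b v] d v unfolding diag_basis_def by auto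
      then show False using v by simp
    qed
  qed
qed

definition A :: "'a \<Rightarrow> 'a" where "A v = (\<Sum>i\<in>Basis. B i v *\<^sub>R i)"

lemma riesz: "x \<bullet> A v = B x v"
proof -
  have "x \<bullet> A v = (\<Sum>i\<in>Basis. (x \<bullet> i) * B i v)"
    unfolding A_def by (simp add: inner_sum_right mult.commute)
  also have "\<dots> = B (\<Sum>i\<in>Basis. (x \<bullet> i) *\<^sub>R i) v" by (simp add: sumL)
  also have "\<dots> = B x v" by (simp add: euclidean_representation)
  finally show ?thesis .
qed

lemma linA: "linear A"
proof (rule linearI)
  show "A (x + y) = A x + A y" for x y unfolding A_def by (simp add: scaleR_add_left sum.distrib)
  show "A (c *\<^sub>R x) = c *\<^sub>R A x" for c x unfolding A_def by (simp add: scaleR_sum_right)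
qed

lemma injA: "inj A"
proof (rule injI)
  fix v w assume "A v = A w"
  then have "B x v = B x w" for x using riesz by metis
  then have h: "B (v - w) x = 0" for x by (simp add: symm[of v] symm[of w])
  show "v = w" using nondeg[of "v - w"] h by simp
qed

lemma subspace_perp: "subspace (orth_compl B S)"
  unfolding subspace_def orth_compl_def by auto

lemma dim_perp:
  assumes "subspace S"
  shows "dim (orth_compl B S) + dim S = DIM('a)"
proof -
  define E where "E = {y \<in> UNIV. \<forall>x\<in>S. orthogonal x y}"
  have 1: "dim E + dim S = DIM('a)"
    using dim_subspace_orthogonal_to_vectors[of S UNIV] assms unfolding E_def by simp
  have "A ` orth_compl B S = E"
  proof
    show "A ` orth_compl B S \<subseteq> E" unfolding E_def orth_compl_def orthogonal_def by (auto simp: riesz)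
    show "E \<subseteq> A ` orth_compl B S"
    proof
      fix y assume y: "y \<in> E"
      obtain v where "y = A v" using linear_inj_imp_surj[OF linA injA] by (metis surjD)
      then show "y \<in> A ` orth_compl B S" using y unfolding E_def orth_compl_def orthogonal_def by (auto simp: riesz)
    qed
  qed
  moreover have "dim (A ` orth_compl B S) = dim (orth_compl B S)"
    using dim_image_eq[OF linA] injA by (metis inj_on_subset subset_UNIV)
  ultimately show ?thesis using 1 by simp
qed

lemma perp_perp:
  assumes "subspace S"
  shows "orth_compl B (orth_compl B S) = S"
proof -
  have "S \<subseteq> orth_compl B (orth_compl B S)" unfolding orth_compl_def by (auto simp: symm)
  moreover have "dim (orth_compl B (orth_compl B S)) = dim S"
    using dim_perp[OF assms] dim_perp[OF subspace_perp[of S]] by simp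
  ultimately show ?thesis using subspace_dim_equal[OF assms subspace_perp] by (metis order_refl)
qed

lemma transversal:
  fixes S T :: "'a set"
  assumes "subspace S" "subspace T" "\<And>x. x \<in> S \<Longrightarrow> x \<in> T \<Longrightarrow> x = 0"
  shows "dim S + dim T \<le> DIM('a)"
proof -
  have "S \<inter> T \<subseteq> {0}" using assms(3) by auto
  from dim_subset[OF this] have d0: "dim (S \<inter> T) = 0" by simp
  show ?thesis using dim_sums_Int[OF assms(1,2)] dim_subset_UNIV[of "{x + y |x y. x \<in> S \<and> y \<in> T}"] d0
    by linarith
qed

lemma decomp:
  assumes "subspace S" "\<And>x. x \<in> S \<Longrightarrow> x \<in> orth_compl B S \<Longrightarrow> x = 0"
  shows "\<exists>s\<in>S. \<exists>u\<in>orth_compl B S. y = s + u"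
proof -
  let ?T = "orth_compl B S"
  let ?ST = "{x + y |x y. x \<in> S \<and> y \<in> ?T}"
  have "S \<inter> ?T \<subseteq> {0}" using assms(2) by auto
  from dim_subset[OF this] have d0: "dim (S \<inter> ?T) = 0" by simp
  have "dim ?ST = DIM('a)" using dim_sums_Int[OF assms(1) subspace_perp[of S]] dim_perp[OF assms(1)] d0 by linarith
  then have "span ?ST = UNIV" using dim_eq_full by auto
  moreover have "span ?ST = ?ST" using subspace_sums[OF assms(1) subspace_perp] by (simp add: span_eq_iff)
  ultimately have "y \<in> ?ST" by simp
  then show ?thesis by blast
qed

lemma ext:
  assumes "subspace H" "\<And>v. v \<in> H \<Longrightarrow> v \<noteq> 0 \<Longrightarrow> B v v > 0"
    and "z \<in> orth_compl B H" "B z z > 0"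
  shows "pos_plane B (dim H + 1) {h + c *\<^sub>R z | h c. h \<in> H}"
proof -
  let ?P = "{h + c *\<^sub>R z | h c. h \<in> H}"
  have zH: "B h z = 0" "B z h = 0" if "h \<in> H" for h using assms(3) that unfolding orth_compl_def
    by (auto simp: symm[of z])
  have z0: "z \<noteq> 0" using assms(4) by auto
  have eq: "?P = {x + y |x y. x \<in> H \<and> y \<in> span {z}}" unfolding span_singleton by auto
  have "H \<inter> span {z} \<subseteq> {0}"
  proof
    fix x assume "x \<in> H \<inter> span {z}"
    then obtain c where x: "x \<in> H" "x = c *\<^sub>R z" unfolding span_singleton by auto
    then have "c * B z z = 0" using zH(1)[of x] by simp
    then show "x \<in> {0}" using x assms(4) by simp
  qed
  from dim_subset[OF this] have d1: "dim (H \<inter> span {z}) = 0" by simp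
  have d2: "dim (span {z}) = 1" using z0 by simp
  have "dim ?P = dim H + 1" unfolding eq using dim_sums_Int[OF assms(1) subspace_span[of "{z}"]] d1 d2 by linarith
  moreover have "subspace ?P" unfolding eq using subspace_sums[OF assms(1) subspace_span] .
  moreover have "B x x > 0" if xP: "x \<in> ?P" "x \<noteq> 0" for x
  proof -
    obtain h c where x: "x = h + c *\<^sub>R z" "h \<in> H" using xP(1) by blast
    have "B x x = B h h + c^2 * B z z" using zH[OF x(2)] unfolding x(1) by (simp add: power2_eq_square)
    moreover have "B h h \<ge> 0" using assms(2)[of h] x(2) by (cases "h = 0") auto
    moreover have "h \<noteq> 0 \<or> c \<noteq> 0" using xP x by auto
    moreover have "c^2 * B z z \<ge> 0" using assms(4) by simp
    moreover have "B h h > 0 \<or> c^2 * B z z > 0" using assms(2)[of h] x(2) assms(4) \<open>h \<noteq> 0 \<or> c \<noteq> 0\<close> by auto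
    ultimately show ?thesis by linarith
  qed
  ultimately show ?thesis unfolding pos_plane_def by auto
qed

lemma eps_pos:
  fixes a c :: real
  assumes "a \<noteq> 0"
  shows "2 * (a / (\<bar>c\<bar> + 1)) * a + (a / (\<bar>c\<bar> + 1))^2 * c > 0"
proof -
  define d where "d = \<bar>c\<bar> + 1"
  have d: "d > 0" unfolding d_def by simp
  define q where "q = a / d"
  have aq: "a = q * d" unfolding q_def using d by simp
  have e: "2 * q * a + q^2 * c = q^2 * (2 * d + c)"
    unfolding aq by (simp add: power2_eq_square algebra_simps)
  have p1: "2 * d + c > 0" unfolding d_def by (cases "c \<ge> 0") auto
  have "q \<noteq> 0" using assms aq by auto
  then have p2: "q^2 > 0" by simp
  have "2 * q * a + q^2 * c > 0" unfolding e using p1 p2 by simp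
  then show ?thesis unfolding q_def d_def .
qed

end

locale sig = pef +
  fixes k :: nat
  assumes sig: "q_plus B UNIV = k"
begin

definition b0 where "b0 = (SOME b. diag_basis B UNIV b)"
definition b1 where "b1 = {e \<in> b0. B e e = 1}"

lemma d0: "diag_basis B UNIV b0" unfolding b0_def by (rule diag_some) simp

lemma card_b0: "card b0 = DIM('a)"
  using d0 dim_span_eq_card_independent[of b0] unfolding diag_basis_def by auto

lemma card_b1: "card b1 = k" using sig unfolding q_plus_def b1_def b0_def by simp

lemma pos_exists: "\<exists>P. subspace P \<and> dim P = k \<and> (\<forall>v\<in>P. v \<noteq> 0 \<longrightarrow> B v v > 0)"
proof (intro exI conjI)
  have sub: "b1 \<subseteq> b0" unfolding b1_def by auto
  have ind: "independent b1" using d0 independent_mono[OF _ sub] unfolding diag_basis_def by blast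
  show "subspace (span b1)" by simp
  show "dim (span b1) = k" using dim_span_eq_card_independent[OF ind] card_b1 by simp
  have fin1: "finite b1" using d0 finite_subset[OF sub] unfolding diag_basis_def by blast
  have orth1: "\<forall>u\<in>b1. \<forall>v\<in>b1. u \<noteq> v \<longrightarrow> B u v = 0" using d0 sub unfolding diag_basis_def by blast
  have pos1: "\<forall>e\<in>b1. B e e > 0" unfolding b1_def by auto
  show "\<forall>v\<in>span b1. v \<noteq> 0 \<longrightarrow> B v v > 0"
    using pos_span[OF fin1 orth1 pos1] by blast
qed

lemma neg_bound:
  assumes "subspace N" "\<And>v. v \<in> N \<Longrightarrow> B v v \<le> 0"
  shows "dim N + k \<le> DIM('a)"
proof -
  obtain P where P: "subspace P" "dim P = k" "\<forall>v\<in>P. v \<noteq> 0 \<longrightarrow> B v v > 0" using pos_exists by blast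
  have "x = 0" if "x \<in> P" "x \<in> N" for x
    using P(3) assms(2)[OF that(2)] that(1) by (meson not_less)
  then have "dim P + dim N \<le> DIM('a)"
    using transversal[OF P(1) assms(1)] by blast
  then show ?thesis using P(2) by simp
qed

lemma pos_bound:
  assumes "subspace P" "\<And>v. v \<in> P \<Longrightarrow> v \<noteq> 0 \<Longrightarrow> B v v > 0"
  shows "dim P \<le> k"
proof -
  define b2 where "b2 = b0 - b1"
  have sub2: "b2 \<subseteq> b0" unfolding b2_def by auto
  have ind: "independent b2" using d0 independent_mono[OF _ sub2] unfolding diag_basis_def by blast
  have fin: "finite b0" using d0 unfolding diag_basis_def by auto
  have "card b2 = DIM('a) - k" unfolding b2_def using card_b0 card_b1 fin
    by (simp add: card_Diff_subset b1_def)
  then have dN: "dim (span b2) = DIM('a) - k" using dim_span_eq_card_independent[OF ind] by simp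
  have np2: "\<forall>e\<in>b2. B e e \<le> 0"
  proof
    fix e assume e: "e \<in> b2"
    then have "B e e \<in> {-1, 0, 1}" "B e e \<noteq> 1" using d0 unfolding diag_basis_def b2_def b1_def by auto
    then show "B e e \<le> 0" by auto
  qed
  have fin2: "finite b2" using fin finite_subset[OF sub2] by blast
  have orth2: "\<forall>u\<in>b2. \<forall>v\<in>b2. u \<noteq> v \<longrightarrow> B u v = 0" using d0 sub2 unfolding diag_basis_def by blast
  have np: "v \<in> span b2 \<Longrightarrow> B v v \<le> 0" for v
    using nonpos_span[OF fin2 orth2 np2] by blast
  have "x = 0" if "x \<in> P" "x \<in> span b2" for x
    using assms(2)[OF that(1)] np[OF that(2)] by (meson not_less)
  then have "dim P + dim (span b2) \<le> DIM('a)"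
    using transversal[OF assms(1) subspace_span] by blast
  moreover have "card b1 \<le> card b0" using fin by (intro card_mono) (auto simp: b1_def)
  then have "k \<le> DIM('a)" using card_b1 card_b0 by simp
  ultimately show ?thesis using dN by simp
qed

lemma no_nonneg_perp:
  assumes "subspace S" "\<And>v. v \<in> S \<Longrightarrow> v \<noteq> 0 \<Longrightarrow> B v v > 0" "dim S = k"
    and "x \<in> orth_compl B S" "B x x \<ge> 0"
  shows "x = 0"
proof (rule ccontr)
  assume x0: "x \<noteq> 0"
  have nopos: False if "u \<in> orth_compl B S" "B u u > 0" for u
  proof -
    have "pos_plane B (k + 1) {h + c *\<^sub>R u | h c. h \<in> S}" using ext[OF assms(1,2) that] assms(3) by simp
    then have "subspace {h + c *\<^sub>R u | h c. h \<in> S}" "dim {h + c *\<^sub>R u | h c. h \<in> S} = k + 1"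
      "\<And>v. v \<in> {h + c *\<^sub>R u | h c. h \<in> S} \<Longrightarrow> v \<noteq> 0 \<Longrightarrow> B v v > 0"
      unfolding pos_plane_def by auto
    from pos_bound[OF this(1,3)] this(2) show False by simp
  qed
  have "B x x = 0" using nopos[OF assms(4)] assms(5) by force
  obtain y where y: "B x y \<noteq> 0" using nondeg x0 by blast
  have int0: "v = 0" if "v \<in> S" "v \<in> orth_compl B S" for v
    using that assms(2)[of v] unfolding orth_compl_def by force
  obtain s u where su: "s \<in> S" "u \<in> orth_compl B S" "y = s + u" using decomp[OF assms(1) int0] by blast
  have "B x s = 0" using assms(4) su(1) unfolding orth_compl_def by (simp add: symm[of x])
  then have a: "B x u \<noteq> 0" using y su by simp
  define \<epsilon> where "\<epsilon> = B x u / (\<bar>B u u\<bar> + 1)"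
  have mem: "x + \<epsilon> *\<^sub>R u \<in> orth_compl B S"
    using assms(4) su(2) subspace_perp[of S] by (simp add: subspace_add subspace_scale)
  have eq: "B (x + \<epsilon> *\<^sub>R u) (x + \<epsilon> *\<^sub>R u) = 2 * \<epsilon> * B x u + \<epsilon>^2 * B u u"
    using \<open>B x x = 0\<close> by (simp add: symm[of u x] power2_eq_square algebra_simps)
  have pos: "2 * \<epsilon> * B x u + \<epsilon>^2 * B u u > 0" unfolding \<epsilon>_def using eps_pos[OF a] .
  show False using nopos[OF mem] eq pos by linarith
qed

end

lemma dim0:
  fixes S T :: "'a::euclidean_space set"
  assumes "\<And>x. x \<in> S \<Longrightarrow> x \<in> T \<Longrightarrow> x = 0"
  shows "dim (S \<inter> T) = 0"
proof -
  have "S \<inter> T \<subseteq> {0}" using assms by auto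
  from dim_subset[OF this] show ?thesis by simp
qed

locale hsetup = sig +
  fixes H :: "'a set"
  assumes Hs: "subspace H" and Hdim: "dim H + 1 = k"
    and Hpos: "\<And>v. v \<in> H \<Longrightarrow> v \<noteq> 0 \<Longrightarrow> B v v > 0"
begin

abbreviation "K \<equiv> orth_compl B H"

lemma int0: "v \<in> H \<Longrightarrow> v \<in> K \<Longrightarrow> v = 0"
  using Hpos[of v] unfolding orth_compl_def by force

lemma key:
  assumes "z \<in> K" "B z z > 0" "x \<in> K" "B z x = 0" "B x x \<ge> 0"
  shows "x = 0"
proof -
  let ?S = "{h + c *\<^sub>R z | h c. h \<in> H}"
  have "pos_plane B k ?S" using ext[OF Hs Hpos assms(1,2)] Hdim by simp
  then have S: "subspace ?S" "dim ?S = k" "\<And>v. v \<in> ?S \<Longrightarrow> v \<noteq> 0 \<Longrightarrow> B v v > 0"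
    unfolding pos_plane_def by auto
  have "x \<in> orth_compl B ?S"
    unfolding orth_compl_def using assms(3,4) unfolding orth_compl_def by auto
  from no_nonneg_perp[OF S(1) S(3) S(2) this assms(5)] show ?thesis .
qed

lemma proj:
  "proj_perp B H v \<in> K \<and> v - proj_perp B H v \<in> H"
  "w \<in> K \<Longrightarrow> v - w \<in> H \<Longrightarrow> proj_perp B H v = w"
proof -
  have ex: "\<exists>w. w \<in> K \<and> v - w \<in> H"
  proof -
    obtain s u where "s \<in> H" "u \<in> K" "v = s + u" using decomp[OF Hs int0] by blast
    then show ?thesis by (intro exI[of _ u]) auto
  qed
  have un: "w1 = w2" if "w1 \<in> K \<and> v - w1 \<in> H" "w2 \<in> K \<and> v - w2 \<in> H" for w1 w2
  proof -
    have "w1 - w2 \<in> H" using that Hs subspace_diff[of H "v - w2" "v - w1"] by simp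
    moreover have "w1 - w2 \<in> K" using that subspace_perp[of H] by (simp add: subspace_diff)
    ultimately have "w1 - w2 = 0" using int0 by blast
    then show ?thesis by simp
  qed
  have eu: "\<exists>!w. w \<in> K \<and> v - w \<in> H" using ex un by blast
  show "proj_perp B H v \<in> K \<and> v - proj_perp B H v \<in> H"
    unfolding proj_perp_def using theI'[OF eu] .
  show "w \<in> K \<Longrightarrow> v - w \<in> H \<Longrightarrow> proj_perp B H v = w"
    unfolding proj_perp_def using the1_equality[OF eu] by blast
qed

lemma timelike: "\<exists>t\<in>K. B t t > 0"
proof (rule ccontr)
  assume "\<not> ?thesis"
  then have "\<And>u. u \<in> K \<Longrightarrow> B u u \<le> 0" by force
  from neg_bound[OF subspace_perp this] have "dim K + k \<le> DIM('a)" .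
  moreover have "dim K + dim H = DIM('a)" using dim_perp[OF Hs] .
  ultimately show False using Hdim by linarith
qed

definition "Q = {w \<in> K. B w w \<ge> 0 \<and> w \<noteq> 0}"

lemma nz: "t \<in> K \<Longrightarrow> B t t > 0 \<Longrightarrow> w \<in> Q \<Longrightarrow> B t w \<noteq> 0"
  using key[of t w] unfolding Q_def by auto

lemma cone_connected:
  assumes t: "t \<in> K" "B t t > 0"
  shows "connected {w \<in> Q. B t w > 0}"
proof (rule starlike_imp_connected)
  show "starlike {w \<in> Q. B t w > 0}" unfolding starlike_def
  proof (intro bexI ballI)
    show "t \<in> {w \<in> Q. B t w > 0}" using t unfolding Q_def by auto
    fix x assume x: "x \<in> {w \<in> Q. B t w > 0}"
    show "closed_segment t x \<subseteq> {w \<in> Q. B t w > 0}"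
    proof
      fix y assume "y \<in> closed_segment t x"
      then obtain u where u: "0 \<le> u" "u \<le> 1" "y = (1 - u) *\<^sub>R t + u *\<^sub>R x"
        unfolding closed_segment_def by auto
      have xK: "x \<in> K" "B x x \<ge> 0" "B t x > 0" using x unfolding Q_def by auto
      have yK: "y \<in> K" using u(3) xK(1) t(1) subspace_perp[of H]
        by (simp add: subspace_add subspace_scale)
      have "B t y = (1 - u) * B t t + u * B t x" using u(3) by simp
      moreover have "(1 - u) * B t t \<ge> 0" "u * B t x \<ge> 0" using u t xK by auto
      moreover have "(1 - u) * B t t > 0 \<or> u * B t x > 0"
        using u t xK by (cases "u = 1") auto
      ultimately have Bty: "B t y > 0" by linarith
      have "B y y = (1 - u)^2 * B t t + 2 * (u * (1 - u)) * B t x + u^2 * B x x"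
        unfolding u(3) by (simp add: symm[of x t] power2_eq_square algebra_simps)
      moreover have "(1 - u)^2 * B t t \<ge> 0" "2 * (u * (1 - u)) * B t x \<ge> 0" "u^2 * B x x \<ge> 0"
        using u t xK by auto
      ultimately have "B y y \<ge> 0" by linarith
      moreover have "y \<noteq> 0" using Bty by auto
      ultimately show "y \<in> {w \<in> Q. B t w > 0}" using yK Bty unfolding Q_def by auto
    qed
  qed
qed

lemma comp_cone:
  assumes "C \<in> components Q"
  shows "\<exists>t\<in>K. B t t > 0 \<and> {w \<in> Q. B t w > 0} \<subseteq> C"
proof -
  obtain x0 where x0: "x0 \<in> Q" "C = connected_component_set Q x0" using assms components_iff by blast
  obtain t where t: "t \<in> K" "B t t > 0" using timelike by blast
  define t' where "t' = (if B t x0 > 0 then t else - t)"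
  have t': "t' \<in> K" "B t' t' > 0" using t subspace_perp[of H] unfolding t'_def
    by (auto simp: subspace_neg)
  have "B t x0 \<noteq> 0" using nz[OF t x0(1)] .
  then have "B t' x0 > 0" unfolding t'_def by auto
  then have "{w \<in> Q. B t' w > 0} \<subseteq> C"
    unfolding x0(2) using x0(1) cone_connected[OF t']
    by (intro connected_component_maximal) auto
  then show ?thesis using t' by blast
qed

lemma step1:
  "orth_extendable B k Z H \<longleftrightarrow> (\<exists>v\<in>Z \<inter> K. B v v > 0)"
proof
  assume "orth_extendable B k Z H"
  then obtain z where z: "z \<in> Z \<inter> K" and P: "pos_plane B k {h + c *\<^sub>R z | h c. h \<in> H}"
    unfolding orth_extendable_def by blast
  show "\<exists>v\<in>Z \<inter> K. B v v > 0"
  proof (cases "z = 0")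
    case True
    have "{h + c *\<^sub>R z | h c. h \<in> H} = H" unfolding True by force
    then show ?thesis using P Hdim unfolding pos_plane_def by simp
  next
    case False
    have "z \<in> {h + c *\<^sub>R z | h c. h \<in> H}"
      using subspace_0[OF Hs] by (intro CollectI exI[of _ 0] exI[of _ 1]) auto
    then have "B z z > 0" using P False unfolding pos_plane_def by blast
    then show ?thesis using z by blast
  qed
next
  assume "\<exists>v\<in>Z \<inter> K. B v v > 0"
  then obtain z where z: "z \<in> Z \<inter> K" "B z z > 0" by blast
  have "pos_plane B k {h + c *\<^sub>R z | h c. h \<in> H}" using ext[OF Hs Hpos _ z(2)] z(1) Hdim by simp
  then show "orth_extendable B k Z H" unfolding orth_extendable_def using z(1) by blast
qed

lemma find_w:
  assumes Zs: "subspace Z" and np: "\<And>v. v \<in> Z \<inter> K \<Longrightarrow> B v v \<le> 0"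
  shows "\<exists>w. w \<in> K \<and> w \<in> orth_compl B (Z \<inter> K) \<and> w \<noteq> 0 \<and> B w w \<ge> 0"
proof -
  let ?W = "Z \<inter> K"
  have Ws: "subspace ?W" using Zs subspace_perp[of H] by (rule subspace_inter)
  show ?thesis
  proof (cases "\<exists>w\<in>?W. w \<noteq> 0 \<and> B w w = 0")
    case True
    then obtain w where w: "w \<in> ?W" "w \<noteq> 0" "B w w = 0" by blast
    have "B u w = 0" if u: "u \<in> ?W" for u
    proof (rule ccontr)
      assume a0: "B u w \<noteq> 0"
      then have a: "B w u \<noteq> 0" by (simp add: symm)
      define \<epsilon> where "\<epsilon> = B w u / (\<bar>B u u\<bar> + 1)"
      have mem: "w + \<epsilon> *\<^sub>R u \<in> ?W" using subspace_add[OF Ws w(1) subspace_scale[OF Ws u]] .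
      have eq: "B (w + \<epsilon> *\<^sub>R u) (w + \<epsilon> *\<^sub>R u) = 2 * \<epsilon> * B w u + \<epsilon>^2 * B u u"
        using w(3) by (simp add: symm[of u w] power2_eq_square algebra_simps)
      have pos: "2 * \<epsilon> * B w u + \<epsilon>^2 * B u u > 0" unfolding \<epsilon>_def using eps_pos[OF a] .
      show False using np[OF mem] eq pos by linarith
    qed
    then have "w \<in> orth_compl B ?W" unfolding orth_compl_def by auto
    then show ?thesis using w by auto
  next
    case False
    then have negd: "\<And>w. w \<in> ?W \<Longrightarrow> w \<noteq> 0 \<Longrightarrow> B w w < 0" using np by (meson le_less)
    let ?S = "{h + y | h y. h \<in> H \<and> y \<in> ?W}"
    have Ss: "subspace ?S" using subspace_sums[OF Hs Ws] .
    have "\<exists>u\<in>orth_compl B ?S. B u u > 0"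
    proof (rule ccontr)
      assume "\<not> ?thesis"
      then have npS: "\<And>u. u \<in> orth_compl B ?S \<Longrightarrow> B u u \<le> 0" by force
      let ?N = "{y + u | y u. y \<in> ?W \<and> u \<in> orth_compl B ?S}"
      have WS: "y \<in> ?S" if "y \<in> ?W" for y using that subspace_0[OF Hs] by force
      have Ns: "subspace ?N" using subspace_sums[OF Ws subspace_perp] .
      have "B x x \<le> 0" if xN: "x \<in> ?N" for x
      proof -
        obtain y u where x: "x = y + u" "y \<in> ?W" "u \<in> orth_compl B ?S" using xN by blast
        have "B y u = 0" using x(3) WS[OF x(2)] unfolding orth_compl_def by blast
        then have "B x x = B y y + B u u" unfolding x(1) by (simp add: symm[of u y])
        then show ?thesis using np[OF x(2)] npS[OF x(3)] by linarith
      qed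
      from neg_bound[OF Ns this] have 1: "dim ?N + k \<le> DIM('a)" .
      have d0: "dim (?W \<inter> orth_compl B ?S) = 0"
      proof (rule dim0)
        fix x assume "x \<in> ?W" "x \<in> orth_compl B ?S"
        then have "B x x = 0" using WS unfolding orth_compl_def by blast
        then show "x = 0" using negd \<open>x \<in> ?W\<close> by force
      qed
      have 2: "dim ?N = dim ?W + dim (orth_compl B ?S)"
        using dim_sums_Int[OF Ws subspace_perp[of ?S]] d0 by linarith
      have 3: "dim (orth_compl B ?S) + dim ?S = DIM('a)" using dim_perp[OF Ss] .
      have d1: "dim (H \<inter> ?W) = 0" by (rule dim0) (use int0 in blast)
      have 4: "dim ?S = dim H + dim ?W" using dim_sums_Int[OF Hs Ws] d1 by linarith
      show False using 1 2 3 4 Hdim by linarith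
    qed
    then obtain u where u: "u \<in> orth_compl B ?S" "B u u > 0" by blast
    have "u \<in> K" using u(1) subspace_0[OF Ws] unfolding orth_compl_def by force
    moreover have "u \<in> orth_compl B ?W" using u(1) subspace_0[OF Hs] unfolding orth_compl_def by force
    moreover have "u \<noteq> 0" using u(2) by auto
    ultimately show ?thesis using u(2) by auto
  qed
qed

lemma perp_sum:
  assumes Zs: "subspace Z"
  shows "orth_compl B {x + h | x h. x \<in> orth_compl B Z \<and> h \<in> H} = Z \<inter> K"
proof
  show "orth_compl B {x + h | x h. x \<in> orth_compl B Z \<and> h \<in> H} \<subseteq> Z \<inter> K"
  proof
    fix v assume v: "v \<in> orth_compl B {x + h | x h. x \<in> orth_compl B Z \<and> h \<in> H}"
    have "v \<in> orth_compl B (orth_compl B Z)"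
      using v subspace_0[OF Hs] unfolding orth_compl_def by force
    then have "v \<in> Z" using perp_perp[OF Zs] by simp
    moreover have "v \<in> K" unfolding orth_compl_def
    proof (intro CollectI ballI)
      fix u assume "u \<in> H"
      then have "0 + u \<in> {x + h | x h. x \<in> orth_compl B Z \<and> h \<in> H}"
        using subspace_0[OF subspace_perp[of Z]] by blast
      then have "B (0 + u) v = 0" using v unfolding orth_compl_def by blast
      then show "B u v = 0" by simp
    qed
    ultimately show "v \<in> Z \<inter> K" by blast
  qed
  show "Z \<inter> K \<subseteq> orth_compl B {x + h | x h. x \<in> orth_compl B Z \<and> h \<in> H}"
    unfolding orth_compl_def by (auto simp: symm)
qed

lemma step2:
  assumes Zs: "subspace Z" and C: "C \<in> components Q"
  shows "(\<exists>v\<in>Z \<inter> K. B v v > 0) \<longleftrightarrow> proj_perp B H ` orth_compl B Z \<inter> C = {}"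
proof
  assume "\<exists>v\<in>Z \<inter> K. B v v > 0"
  then obtain z where z: "z \<in> Z" "z \<in> K" "B z z > 0" by blast
  show "proj_perp B H ` orth_compl B Z \<inter> C = {}"
  proof (rule ccontr)
    assume "proj_perp B H ` orth_compl B Z \<inter> C \<noteq> {}"
    then obtain v where v: "v \<in> orth_compl B Z" "proj_perp B H v \<in> C" by blast
    let ?y = "proj_perp B H v"
    have yQ: "?y \<in> Q" using v(2) C in_components_subset by blast
    have "B z v = 0" using v(1) z(1) unfolding orth_compl_def by blast
    moreover have "B (v - ?y) z = 0" using proj(1)[of v] z(2) unfolding orth_compl_def by blast
    ultimately have "B z ?y = 0" by (simp add: symm[of _ z])
    then have "?y = 0" using key[OF z(2,3)] yQ unfolding Q_def by blast
    then show False using yQ unfolding Q_def by blast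
  qed
next
  assume empty: "proj_perp B H ` orth_compl B Z \<inter> C = {}"
  show "\<exists>v\<in>Z \<inter> K. B v v > 0"
  proof (rule ccontr)
    assume "\<not> ?thesis"
    then have "\<And>v. v \<in> Z \<inter> K \<Longrightarrow> B v v \<le> 0" by force
    from find_w[OF Zs this] obtain w where
      w: "w \<in> K" "w \<in> orth_compl B (Z \<inter> K)" "w \<noteq> 0" "B w w \<ge> 0" by blast
    obtain t where t: "t \<in> K" "B t t > 0" "{w \<in> Q. B t w > 0} \<subseteq> C" using comp_cone[OF C] by blast
    have wQ: "w \<in> Q" using w unfolding Q_def by auto
    define w' where "w' = (if B t w > 0 then w else - w)"
    have w'K: "w' \<in> K" "w' \<in> orth_compl B (Z \<inter> K)"
      using w subspace_perp unfolding w'_def by (auto simp: subspace_neg)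
    have w'Q: "w' \<in> Q" using wQ unfolding w'_def Q_def by (auto simp: subspace_neg subspace_perp)
    have "B t w \<noteq> 0" using nz[OF t(1,2) wQ] .
    then have "B t w' > 0" unfolding w'_def by auto
    then have w'C: "w' \<in> C" using t(3) w'Q by blast
    let ?U = "{x + h | x h. x \<in> orth_compl B Z \<and> h \<in> H}"
    have Us: "subspace ?U" using subspace_sums[OF subspace_perp Hs] .
    have "w' \<in> ?U" using w'K(2) perp_sum[OF Zs] perp_perp[OF Us] by simp
    then obtain x h where xh: "w' = x + h" "x \<in> orth_compl B Z" "h \<in> H" by blast
    have "x - w' \<in> H" using xh Hs by (simp add: subspace_neg)
    then have "proj_perp B H x = w'" using proj(2) w'K(1) by blast
    then have "w' \<in> proj_perp B H ` orth_compl B Z" using xh(2) by blast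
    then show False using empty w'C by blast
  qed
qed

end

theorem lemma3:
  fixes B :: "'a::euclidean_space \<Rightarrow> 'a \<Rightarrow> real"
    and Z H C :: "'a set" and k l :: nat
  assumes "pe_form B"
    and "has_signature B k l"
    and "k \<ge> 2" and "l \<ge> 2"
    and "subspace Z" and "q_plus B Z \<ge> 1"
    and "pos_plane B (k - 1) H"
    and "C \<in> components {w \<in> orth_compl B H. B w w \<ge> 0 \<and> w \<noteq> 0}"
  shows "(orth_extendable B k Z H \<longleftrightarrow> q_plus B (Z \<inter> orth_compl B H) \<ge> 1)
    \<and> (q_plus B (Z \<inter> orth_compl B H) \<ge> 1 \<longleftrightarrow>
         proj_perp B H ` orth_compl B Z \<inter> C = {})"
proof -
  have H: "subspace H" "dim H = k - 1" "\<And>v. v \<in> H \<Longrightarrow> v \<noteq> 0 \<Longrightarrow> B v v > 0"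
    using assms(7) unfolding pos_plane_def by auto
  interpret hsetup B k H
  proof unfold_locales
    show "pe_form B" by (rule assms(1))
    show "q_plus B UNIV = k" using assms(2) unfolding has_signature_def by simp
    show "subspace H" by (rule H(1))
    show "dim H + 1 = k" using H(2) assms(3) by simp
    show "\<And>v. v \<in> H \<Longrightarrow> v \<noteq> 0 \<Longrightarrow> B v v > 0" by (rule H(3))
  qed
  have C: "C \<in> components Q" using assms(8) unfolding Q_def .
  have Ws: "subspace (Z \<inter> orth_compl B H)" using assms(5) subspace_perp[of H] by (rule subspace_inter)
  show ?thesis using step1 step2[OF assms(5) C] qplus_iff[OF Ws] by simp
qed

end
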